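(* $\mathrm{co}\text{-}\mathrm{CFL}\not\subseteq\mathrm{CFL}/n$. Equivalently, $\mathrm{co}\text{-}\mathrm{CFL}/n\neq\mathrm{CFL}/n$.
   Context: $\mathrm{CFL}$ is the family of context-free languages, and $\mathrm{co}\text{-}\mathrm{CFL}$ is the family of all languages whose complements (with respect to their alphabet) are context-free. An advice function is a map $h:\mathbb{N}\to\Gamma^*$, for some alphabet $\Gamma$, with $|h(n)|=n$ for all $n$. For strings $x=x_1\cdots x_n$ and $w=\sigma_1\cdots\sigma_n$ of the same length, $\begin{bmatrix}x\\ w\end{bmatrix}$ denotes the string $\begin{bmatrix}x_1\\ \sigma_1\end{bmatrix}\cdots\begin{bmatrix}x_n\\ \sigma_n\end{bmatrix}$ over the product alphabet of pairs of symbols. For a family $\mathcal{C}$ of languages, $\mathcal{C}/n$ is the family of all languages $L$ over an alphabet $\Sigma$ for which there exist an advice function $h$ and a language $L'\in\mathcal{C}$ such that for all $x\in\Sigma^*$: $x\in L$ iff $\begin{bmatrix}x\\ h(|x|)\end{bmatrix}\in L'$. *)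

theory Defs
  imports Main
begin

text \<open>Context-free grammars: nonterminals are natural numbers (any finite set of
nonterminals can be renamed into nat), terminals of type 't.\<close>

type_synonym 't cfg_prods = "(nat \<times> (nat + 't) list) set"

definition derives1 :: "'t cfg_prods \<Rightarrow> (nat + 't) list \<Rightarrow> (nat + 't) list \<Rightarrow> bool" where
  "derives1 P u v \<longleftrightarrow>
     (\<exists>\<alpha> \<beta> A r. u = \<alpha> @ [Inl A] @ \<beta> \<and> (A, r) \<in> P \<and> v = \<alpha> @ r @ \<beta>)"

definition derives :: "'t cfg_prods \<Rightarrow> (nat + 't) list \<Rightarrow> (nat + 't) list \<Rightarrow> bool" where
  "derives P = (derives1 P)\<^sup>*\<^sup>*"

definition lang :: "'t cfg_prods \<Rightarrow> nat \<Rightarrow> 't list set" where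
  "lang P S = {w. derives P [Inl S] (map Inr w)}"

definition CFL :: "'t set \<Rightarrow> 't list set \<Rightarrow> bool" where
  "CFL Sig L \<longleftrightarrow> L \<subseteq> lists Sig \<and> (\<exists>P S. finite P \<and> L = lang P S)"

definition coCFL :: "'t set \<Rightarrow> 't list set \<Rightarrow> bool" where
  "coCFL Sig L \<longleftrightarrow> L \<subseteq> lists Sig \<and> CFL Sig (lists Sig - L)"

text \<open>CFL/n: advice alphabet Gamma is a finite set of naturals (any finite alphabet
can be renamed into one); zip x w is the track string [x; w].\<close>
definition CFL_advice :: "'t set \<Rightarrow> 't list set \<Rightarrow> bool" where
  "CFL_advice Sig L \<longleftrightarrow> L \<subseteq> lists Sig \<and>
     (\<exists>(Gamma :: nat set) (h :: nat \<Rightarrow> nat list) (L' :: ('t \<times> nat) list set).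
        finite Gamma \<and> (\<forall>n. length (h n) = n \<and> set (h n) \<subseteq> Gamma) \<and>
        CFL (Sig \<times> Gamma) L' \<and>
        (\<forall>x \<in> lists Sig. x \<in> L \<longleftrightarrow> zip x (h (length x)) \<in> L'))"

end

theory Submission
  imports Defs
begin

definition symR :: "'t cfg_prods \<Rightarrow> (nat \<Rightarrow> 't list \<Rightarrow> bool) \<Rightarrow> (nat + 't) \<Rightarrow> 't list \<Rightarrow> bool" where
  "symR P G s w \<longleftrightarrow> (\<forall>B. s = Inl B \<longrightarrow> G B w) \<and> (\<forall>a. s = Inr a \<longrightarrow> w = [a])"

inductive gen :: "'t cfg_prods \<Rightarrow> nat \<Rightarrow> 't list \<Rightarrow> bool" for P where
  genI: "(A, r) \<in> P \<Longrightarrow> list_all2 (\<lambda>s w. (\<forall>B. s = Inl B \<longrightarrow> gen P B w) \<and> (\<forall>a. s = Inr a \<longrightarrow> w = [a])) r ws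
     \<Longrightarrow> gen P A (concat ws)"

abbreviation R where "R P \<equiv> (\<lambda>s w. (\<forall>B. s = Inl B \<longrightarrow> gen P B w) \<and> (\<forall>a. s = Inr a \<longrightarrow> w = [a]))"

lemma derives1_ctx: "derives1 P u u' \<Longrightarrow> derives1 P (x@u@y) (x@u'@y)"
  unfolding derives1_def by (metis append.assoc)

lemma derives_ctx: "derives P u u' \<Longrightarrow> derives P (x@u@y) (x@u'@y)"
  unfolding derives_def
  by (induction rule: rtranclp_induct) (auto intro: rtranclp.rtrancl_into_rtrancl derives1_ctx)

lemma derives_app: "derives P u u' \<Longrightarrow> derives P v v' \<Longrightarrow> derives P (u@v) (u'@v')"
proof -
  assume a: "derives P u u'" "derives P v v'"
  have "derives P (u@v) (u'@v)" using derives_ctx[OF a(1), of "[]" v] by simp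
  moreover have "derives P (u'@v) (u'@v')" using derives_ctx[OF a(2), of u' "[]"] by simp
  ultimately show ?thesis unfolding derives_def by (meson rtranclp_trans)
qed

lemma derives_list: "list_all2 (\<lambda>s w. derives P [s] (map Inr w)) r ws \<Longrightarrow> derives P r (map Inr (concat ws))"
proof (induction rule: list_all2_induct)
  case Nil then show ?case by (simp add: derives_def)
next
  case (Cons s w r ws)
  then show ?case using derives_app[OF Cons(1) Cons(3)] by simp
qed

lemma gen_derives: "gen P A w \<Longrightarrow> derives P [Inl A] (map Inr w)"
proof (induction rule: gen.induct)
  case (genI A r ws)
  have "list_all2 (\<lambda>s w. derives P [s] (map Inr w)) r ws"
    using genI(2) proof (rule list_all2_mono)
    fix s w assume h: "(\<forall>B. s = Inl B \<longrightarrow> gen P B w \<and> derives P [Inl B] (map Inr w)) \<and> (\<forall>a. s = Inr a \<longrightarrow> w = [a])"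
    show "derives P [s] (map Inr w)" using h by (cases s) (auto simp: derives_def)
  qed
  then have "derives P r (map Inr (concat ws))" by (rule derives_list)
  moreover have "derives1 P [Inl A] r" unfolding derives1_def using genI(1)
    by (metis append.left_neutral append.right_neutral)
  ultimately show ?case unfolding derives_def by (meson converse_rtranclp_into_rtranclp)
qed

lemma derives_gen_aux: "derives P u (map Inr z) \<Longrightarrow> \<exists>ws. list_all2 (R P) u ws \<and> z = concat ws"
  unfolding derives_def
proof (induction rule: converse_rtranclp_induct)
  case base
  show ?case by (rule exI[of _ "map (\<lambda>a. [a]) z"]) (auto simp: list_all2_map1 list_all2_map2 list_all2_refl)
next
  case (step u u')
  then obtain ws where ws: "list_all2 (R P) u' ws" "z = concat ws" by blast
  from step(1) obtain \<alpha> \<beta> A r where u: "u = \<alpha> @ [Inl A] @ \<beta>" "(A, r) \<in> P" "u' = \<alpha> @ r @ \<beta>"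
    unfolding derives1_def by blast
  from ws(1) u(3) obtain ws1 ws23 where "ws = ws1 @ ws23" "list_all2 (R P) \<alpha> ws1" "list_all2 (R P) (r@\<beta>) ws23"
    by (auto simp: list_all2_append1)
  moreover then obtain ws2 ws3 where "ws23 = ws2 @ ws3" "list_all2 (R P) r ws2" "list_all2 (R P) \<beta> ws3"
    by (auto simp: list_all2_append1)
  ultimately show ?case using ws(2) u
    by (intro exI[of _ "ws1 @ [concat ws2] @ ws3"]) (auto intro!: list_all2_appendI gen.genI)
qed

lemma lang_gen: "w \<in> lang P S \<longleftrightarrow> gen P S w"
proof
  assume "w \<in> lang P S"
  then obtain ws where "list_all2 (R P) [Inl S] ws" "w = concat ws"
    using derives_gen_aux unfolding lang_def by blast
  then show "gen P S w" by (auto simp: list_all2_Cons1)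
next
  assume "gen P S w" then show "w \<in> lang P S" unfolding lang_def using gen_derives by blast
qed

lemma sum_list_le: "(\<forall>x\<in>set xs. f x \<le> (c::nat)) \<Longrightarrow> sum_list (map f xs) \<le> length xs * c"
  by (induction xs) auto

lemma decomp:
  assumes "gen P X z" "2 \<le> t" "t \<le> length z" "\<forall>(A,r)\<in>P. length r \<le> K"
  shows "\<exists>A u v w. z = u@v@w \<and> gen P A v \<and> A \<in> fst ` P \<and> t \<le> length v \<and> length v \<le> K*t
          \<and> (\<forall>v'. gen P A v' \<longrightarrow> gen P X (u@v'@w))"
  using assms
proof (induction rule: gen.induct)
  case (genI X r ws)
  let ?Q = "\<lambda>s w. (\<forall>B. s = Inl B \<longrightarrow> gen P B w \<and> (2 \<le> t \<longrightarrow> t \<le> length w \<longrightarrow> (\<forall>(A,r)\<in>P. length r \<le> K) \<longrightarrow>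
          (\<exists>A u v wa. w = u @ v @ wa \<and> gen P A v \<and> A \<in> fst ` P \<and> t \<le> length v \<and> length v \<le> K * t \<and>
                (\<forall>v'. gen P A v' \<longrightarrow> gen P B (u @ v' @ wa))))) \<and> (\<forall>a. s = Inr a \<longrightarrow> w = [a])"
  have la: "list_all2 ?Q r ws" using genI(2) by simp
  have len: "length r = length ws" using la by (rule list_all2_lengthD)
  have gX: "gen P X (concat ws)"
    by (rule gen.genI[OF genI(1)]) (use la in \<open>rule list_all2_mono\<close>, auto)
  show ?case
  proof (cases "\<exists>j<length ws. t \<le> length (ws!j)")
    case True
    then obtain j where j: "j < length ws" "t \<le> length (ws!j)" by blast
    have Qj: "?Q (r!j) (ws!j)" using la j(1) by (simp add: list_all2_conv_all_nth)
    obtain B where B: "r!j = Inl B"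
    proof (cases "r!j")
      case (Inr a) then have "ws!j = [a]" using Qj by auto
      then show ?thesis using j genI(3) by auto
    qed
    from Qj B j genI(3,5) obtain A u v wa where
      h: "ws!j = u @ v @ wa" "gen P A v" "A \<in> fst ` P" "t \<le> length v" "length v \<le> K * t"
         "\<forall>v'. gen P A v' \<longrightarrow> gen P B (u @ v' @ wa)" by blast
    show ?thesis
    proof (intro exI conjI)
      show "concat ws = (concat (take j ws) @ u) @ v @ (wa @ concat (drop (Suc j) ws))"
        using id_take_nth_drop[OF j(1)] h(1) by (metis append.assoc concat.simps(2) concat_append)
      show "\<forall>v'. gen P A v' \<longrightarrow> gen P X ((concat (take j ws) @ u) @ v' @ (wa @ concat (drop (Suc j) ws)))"
      proof (intro allI impI)
        fix v' assume "gen P A v'"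
        then have gB: "gen P B (u @ v' @ wa)" using h(6) by blast
        have "list_all2 (R P) r ws" using la by (rule list_all2_mono) auto
        then have "list_all2 (R P) (r[j := r!j]) (ws[j := u @ v' @ wa])"
          by (rule list_all2_update_cong) (use gB B in auto)
        then have "gen P X (concat (ws[j := u @ v' @ wa]))" using genI(1) by (auto intro: gen.genI)
        then show "gen P X ((concat (take j ws) @ u) @ v' @ (wa @ concat (drop (Suc j) ws)))"
          using upd_conv_take_nth_drop[OF j(1)] by simp
      qed
    qed (use h in auto)
  next
    case False
    have "length (concat ws) = sum_list (map length ws)" by (simp add: length_concat)
    also have "\<dots> \<le> length ws * t" by (rule sum_list_le) (use False in \<open>fastforce simp: in_set_conv_nth\<close>)
    also have "\<dots> \<le> K * t" using genI(1,5) len by auto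
    finally show ?thesis using gX genI(1,3,4)
      by (intro exI[of _ X] exI[of _ "[]"] exI[of _ "concat ws"]) force
  qed
qed

definition Sig2 :: "nat set" where "Sig2 = {0,1}"

definition P0 :: "nat cfg_prods" where
  "P0 = {(0,[Inl 1, Inl 2]), (0,[Inl 2, Inl 1]), (1,[Inr 0]), (2,[Inr 1])} \<union>
        {(n,[Inr c, Inl n, Inr d]) | n c d. n \<in> {1,2} \<and> c \<in> {0,1} \<and> d \<in> {0,1}}"

lemma finite_P0: "finite P0"
proof -
  have "{(n,[Inr c, Inl n, Inr d]) | n c d. n \<in> {1::nat,2} \<and> c \<in> {0::nat,1} \<and> d \<in> {0::nat,1}}
        = (\<lambda>(n,c,d). (n,[Inr c, Inl n, Inr d])) ` ({1,2} \<times> {0,1} \<times> {0,1})" by auto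
  then show ?thesis unfolding P0_def by simp
qed

definition odd_w :: "nat \<Rightarrow> nat list \<Rightarrow> bool" where
  "odd_w b w \<longleftrightarrow> (\<exists>p q. w = p@[b]@q \<and> length p = length q \<and> set p \<subseteq> Sig2 \<and> set q \<subseteq> Sig2)"

lemma P0_cases: "(A,r) \<in> P0 \<Longrightarrow> (A = 0 \<and> r = [Inl 1, Inl 2]) \<or> (A = 0 \<and> r = [Inl 2, Inl 1]) \<or>
   (A = 1 \<and> r = [Inr 0]) \<or> (A = 2 \<and> r = [Inr 1]) \<or>
   (\<exists>c d. A \<in> {1,2} \<and> c \<in> Sig2 \<and> d \<in> Sig2 \<and> r = [Inr c, Inl A, Inr d])"
  unfolding P0_def Sig2_def by blast

lemma la2: "list_all2 Q [a,b] ws \<longleftrightarrow> (\<exists>x y. ws = [x,y] \<and> Q a x \<and> Q b y)"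
  by (auto simp: list_all2_Cons1)
lemma la1: "list_all2 Q [a] ws \<longleftrightarrow> (\<exists>x. ws = [x] \<and> Q a x)"
  by (auto simp: list_all2_Cons1)
lemma la3: "list_all2 Q [a,b,c] ws \<longleftrightarrow> (\<exists>x y z. ws = [x,y,z] \<and> Q a x \<and> Q b y \<and> Q c z)"
  by (auto simp: list_all2_Cons1)

lemma odd_ext: "odd_w b w' \<Longrightarrow> c \<in> Sig2 \<Longrightarrow> d \<in> Sig2 \<Longrightarrow> odd_w b (c # w' @ [d])"
proof -
  assume a: "odd_w b w'" "c \<in> Sig2" "d \<in> Sig2"
  then obtain p q where "w' = p@[b]@q" "length p = length q" "set p \<subseteq> Sig2" "set q \<subseteq> Sig2"
    unfolding odd_w_def by blast
  then show ?thesis unfolding odd_w_def using a(2,3)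
    by (intro exI[of _ "c # p"] exI[of _ "q @ [d]"]) simp
qed

lemma odd_base: "b \<in> Sig2 \<Longrightarrow> odd_w b [b]"
  unfolding odd_w_def by (intro exI[of _ "[]"]) simp

lemma gen_P0_sound:
  "gen P0 n w \<Longrightarrow> (n = 1 \<longrightarrow> odd_w 0 w) \<and> (n = 2 \<longrightarrow> odd_w 1 w) \<and>
     (n = 0 \<longrightarrow> (\<exists>x y. w = x@y \<and> (odd_w 0 x \<and> odd_w 1 y \<or> odd_w 1 x \<and> odd_w 0 y)))"
proof (induction rule: gen.induct)
  case (genI A r ws)
  from P0_cases[OF genI(1)] show ?case
  proof (elim disjE exE conjE)
    assume h: "A = 0" "r = [Inl 1, Inl 2]"
    then obtain x y where "ws = [x,y]" "odd_w 0 x" "odd_w 1 y" using genI(2)[unfolded h(2) la2] by auto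
    then show ?thesis using h by auto
  next
    assume h: "A = 0" "r = [Inl 2, Inl 1]"
    then obtain x y where "ws = [x,y]" "odd_w 1 x" "odd_w 0 y" using genI(2)[unfolded h(2) la2] by auto
    then show ?thesis using h by auto
  next
    assume h: "A = 1" "r = [Inr 0]"
    then have "ws = [[0]]" using genI(2)[unfolded h(2) la1] by auto
    then show ?thesis using h odd_base[of 0] by (simp add: Sig2_def)
  next
    assume h: "A = 2" "r = [Inr 1]"
    then have "ws = [[1]]" using genI(2)[unfolded h(2) la1] by auto
    then show ?thesis using h odd_base[of 1] by (simp add: Sig2_def)
  next
    fix c d assume h: "A \<in> {1,2}" "c \<in> Sig2" "d \<in> Sig2" "r = [Inr c, Inl A, Inr d]"
    then obtain w' where w': "ws = [[c], w', [d]]" "(A = 1 \<longrightarrow> odd_w 0 w') \<and> (A = 2 \<longrightarrow> odd_w 1 w')"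
      using genI(2)[unfolded h(4) la3] by auto
    show ?thesis using h w' odd_ext[OF _ h(2,3)] by auto
  qed
qed

lemma gen_P0_odd: "length p = length q \<Longrightarrow> set p \<subseteq> Sig2 \<Longrightarrow> set q \<subseteq> Sig2 \<Longrightarrow> b \<in> Sig2 \<Longrightarrow> gen P0 (b+1) (p@[b]@q)"
proof (induction p arbitrary: q)
  case Nil
  then have "b = 0 \<or> b = 1" by (simp add: Sig2_def)
  then have "(b+1, [Inr b]) \<in> P0" unfolding P0_def by (elim disjE) simp_all
  then show ?case using Nil gen.genI[of "b+1" "[Inr b]" P0 "[[b]]"] by auto
next
  case (Cons c p)
  from Cons(2) obtain q' d where q: "q = q' @ [d]"
    by (cases q rule: rev_cases) auto
  have lq: "length p = length q'" using Cons(2) q by simp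
  have sq: "set q' \<subseteq> Sig2" "d \<in> Sig2" using Cons(4) q by auto
  have sp: "set p \<subseteq> Sig2" "c \<in> Sig2" using Cons(3) by auto
  have IH: "gen P0 (b+1) (p@[b]@q')" by (rule Cons.IH[OF lq sp(1) sq(1) Cons(5)])
  have "b+1 \<in> {1,2}" "c \<in> {0,1}" "d \<in> {0,1}" using Cons(5) sp(2) sq(2) by (auto simp: Sig2_def)
  then have pr: "(b+1, [Inr c, Inl (b+1), Inr d]) \<in> P0" unfolding P0_def by blast
  have "gen P0 (b+1) (concat [[c], p@[b]@q', [d]])"
    by (rule gen.genI[OF pr]) (use IH in simp)
  then show ?case using q by simp
qed

lemma odd_diff:
  assumes "odd_w a x" "odd_w b y" "a \<noteq> b" "length (x@y) = 2*m"
  shows "\<exists>k<m. (x@y)!k \<noteq> (x@y)!(k+m)"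
proof -
  obtain p q p' q' where h: "x = p@[a]@q" "length p = length q" "y = p'@[b]@q'" "length p' = length q'"
    using assms unfolding odd_w_def by blast
  have m: "m = length p + length p' + 1" using assms(4) h by simp
  have "(x@y)!(length p) = a" using h by (simp add: nth_append)
  moreover have "(x@y)!(length p + m) = b" using h m by (simp add: nth_append)
  ultimately show ?thesis using assms(3) m by (intro exI[of _ "length p"]) auto
qed

lemma odd_set: "odd_w b w \<Longrightarrow> b \<in> Sig2 \<Longrightarrow> set w \<subseteq> Sig2"
  unfolding odd_w_def by auto

lemma C_sound: "gen P0 0 s \<Longrightarrow> length s = 2*m \<Longrightarrow> (\<exists>k<m. s!k \<noteq> s!(k+m)) \<and> set s \<subseteq> Sig2"
proof -
  assume a: "gen P0 0 s" "length s = 2*m"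
  then obtain x y where xy: "s = x@y" "odd_w 0 x \<and> odd_w 1 y \<or> odd_w 1 x \<and> odd_w 0 y"
    using gen_P0_sound[OF a(1)] by blast
  have S: "0 \<in> Sig2" "1 \<in> Sig2" by (auto simp: Sig2_def)
  from xy(2) show ?thesis
  proof
    assume h: "odd_w 0 x \<and> odd_w 1 y"
    show ?thesis using odd_diff[of 0 x 1 y m] h a(2) xy(1) odd_set[of 0 x] odd_set[of 1 y] S by auto
  next
    assume h: "odd_w 1 x \<and> odd_w 0 y"
    show ?thesis using odd_diff[of 1 x 0 y m] h a(2) xy(1) odd_set[of 1 x] odd_set[of 0 y] S by auto
  qed
qed

lemma odd_split: "length s = 2*j+1 \<Longrightarrow> s = take j s @ [s!j] @ drop (Suc j) s \<and> length (take j s) = length (drop (Suc j) s)"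
  by (simp add: id_take_nth_drop)

lemma gen_mid: "length s = 2*j+1 \<Longrightarrow> set s \<subseteq> Sig2 \<Longrightarrow> gen P0 (s!j + 1) s"
proof -
  assume a: "length s = 2*j+1" "set s \<subseteq> Sig2"
  have "s!j \<in> Sig2" using a by auto
  moreover have "set (take j s) \<subseteq> Sig2" "set (drop (Suc j) s) \<subseteq> Sig2" using a
    by (meson order_trans set_take_subset set_drop_subset)+
  ultimately have "gen P0 (s!j+1) (take j s @ [s!j] @ drop (Suc j) s)" using odd_split[OF a(1)]
    by (intro gen_P0_odd) auto
  then show ?thesis using odd_split[OF a(1)] by simp
qed

lemma C_complete:
  assumes "length s = 2*m" "set s \<subseteq> Sig2" "k < m" "s!k \<noteq> s!(k+m)"
  shows "gen P0 0 s"
proof -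
  let ?x = "take (2*k+1) s" and ?y = "drop (2*k+1) s"
  have lx: "length ?x = 2*k+1" using assms by simp
  have ly: "length ?y = 2*(m-k-1)+1" using assms by simp
  have sx: "set ?x \<subseteq> Sig2" "set ?y \<subseteq> Sig2" using assms(2) by (meson order_trans set_take_subset set_drop_subset)+
  have gx: "gen P0 (?x!k+1) ?x" by (rule gen_mid[OF lx sx(1)])
  have gy: "gen P0 (?y!(m-k-1)+1) ?y" by (rule gen_mid[OF ly sx(2)])
  have ex: "?x!k = s!k" using assms by simp
  have ey: "?y!(m-k-1) = s!(k+m)" using assms by (simp add: algebra_simps)
  have in2: "s!k \<in> Sig2" "s!(k+m) \<in> Sig2" using assms by auto
  then have cases: "(s!k = 0 \<and> s!(k+m) = 1) \<or> (s!k = 1 \<and> s!(k+m) = 0)" using assms(4) by (auto simp: Sig2_def)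
  have "(0, [Inl 1, Inl 2]) \<in> P0" "(0, [Inl 2, Inl 1]) \<in> P0" by (auto simp: P0_def)
  note pr = this
  from cases have "gen P0 0 (concat [?x, ?y])"
  proof
    assume c: "s!k = 0 \<and> s!(k+m) = 1"
    have g1: "gen P0 1 ?x" using gx ex c by simp
    have g2: "gen P0 2 ?y" using gy ey c by (simp add: numeral_2_eq_2)
    show ?thesis by (rule gen.genI[OF pr(1)]) (use g1 g2 in simp)
  next
    assume c: "s!k = 1 \<and> s!(k+m) = 0"
    have g1: "gen P0 1 ?y" using gy ey c by simp
    have g2: "gen P0 2 ?x" using gx ex c by (simp add: numeral_2_eq_2)
    show ?thesis by (rule gen.genI[OF pr(2)]) (use g1 g2 in simp)
  qed
  then show ?thesis by simp
qed

lemma exp_big: "1 \<le> c \<Longrightarrow> c * (8*c)^2 < (2::nat)^(8*c)"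
proof (induction c rule: nat_induct_at_least)
  case base then show ?case by simp
next
  case (Suc c)
  have "Suc c * (8 * Suc c)^2 = 64 * (Suc c)^3" by (simp add: power2_eq_square power3_eq_cube algebra_simps)
  also have "\<dots> \<le> 64 * (2*c)^3" using Suc(1) by (intro mult_le_mono2 power_mono) auto
  also have "\<dots> = 8 * (c * (8*c)^2)" by (simp add: power2_eq_square power3_eq_cube)
  also have "\<dots> < 8 * 2^(8*c)" using Suc(2) by simp
  also have "\<dots> \<le> 2^(8 * Suc c)" by (simp add: power_add)
  finally show ?case .
qed

lemma rnth:
  assumes "length w = m" "length w' = m" "i + l \<le> 2*m" "p < 2*m"
  shows "(take i (w@w) @ take l (drop i (w'@w')) @ drop (i+l) (w@w)) ! p =
         (if i \<le> p \<and> p < i + l then (w'@w')!p else (w@w)!p)"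
proof -
  have la: "length (take i (w@w)) = i" using assms by simp
  have lb: "length (take l (drop i (w'@w'))) = l" using assms by simp
  show ?thesis
  proof (cases "p < i")
    case True
    have "(take i (w@w) @ take l (drop i (w'@w')) @ drop (i+l) (w@w)) ! p = take i (w@w) ! p"
      using la True by (metis nth_append_left)
    also have "\<dots> = (w@w)!p" using True by (rule nth_take)
    finally show ?thesis using True by simp
  next
    case F1: False
    let ?A = "take i (w@w)" and ?B = "take l (drop i (w'@w'))" and ?C = "drop (i+l) (w@w)"
    have s1: "(?A @ ?B @ ?C) ! p = (?B @ ?C) ! (p - i)"
      using F1 la by (metis nth_append_right not_less)
    show ?thesis
    proof (cases "p < i + l")
      case True
      have pi: "p - i < length ?B" using True F1 lb by simp
      have "(?B @ ?C) ! (p - i) = ?B ! (p - i)" using pi by (rule nth_append_left)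
      also have "\<dots> = drop i (w'@w') ! (p - i)" using pi lb by (metis nth_take)
      also have "\<dots> = (w'@w') ! (i + (p - i))" using True F1 assms by (intro nth_drop) simp
      also have "\<dots> = (w'@w') ! p" using F1 by simp
      finally show ?thesis using True F1 s1 by simp
    next
      case False
      have pi: "length ?B \<le> p - i" using False lb by simp
      have "(?B @ ?C) ! (p - i) = ?C ! (p - i - l)" using pi lb by (metis nth_append_right)
      also have "\<dots> = (w@w) ! (i + l + (p - i - l))" using False F1 assms by (intro nth_drop) simp
      also have "\<dots> = (w@w) ! p" using F1 False by simp
      finally show ?thesis using False F1 s1 by simp
    qed
  qed
qed

lemma swap_r:
  assumes "length w = m" "length w' = m" "i + l \<le> 2*m"
    "r = take i (w@w) @ take l (drop i (w'@w')) @ drop (i+l) (w@w)"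
    "\<forall>k<m. r!k = r!(k+m)" "k < m" "(i \<le> k \<and> k < i+l) \<noteq> (i \<le> k+m \<and> k+m < i+l)"
  shows "w!k = w'!k"
proof -
  have e: "r!k = r!(k+m)" using assms(5,6) by blast
  have a: "r!k = (if i \<le> k \<and> k < i + l then (w'@w')!k else (w@w)!k)"
    using rnth[OF assms(1-3), of k] assms(4,6) by simp
  have b: "r!(k+m) = (if i \<le> k+m \<and> k+m < i + l then (w'@w')!(k+m) else (w@w)!(k+m))"
    using rnth[OF assms(1-3), of "k+m"] assms(4,6) by simp
  have c: "(w'@w')!k = w'!k" "(w@w)!k = w!k" "(w'@w')!(k+m) = w'!k" "(w@w)!(k+m) = w!k"
    using assms(1,2,6) by (auto simp: nth_append)
  show ?thesis using e a b c assms(7) by (auto split: if_splits)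
qed

lemma class_bound:
  fixes Cy :: "nat list set"
  assumes W: "\<forall>w\<in>Cy. set w \<subseteq> Sig2 \<and> length w = m"
    and lm: "l \<le> m" and tl: "t \<le> l" and il: "i + l \<le> 2*m"
    and sw: "\<forall>w\<in>Cy. \<forall>w'\<in>Cy. \<forall>k<m. ((i \<le> k \<and> k < i+l) \<noteq> (i \<le> k+m \<and> k+m < i+l)) \<longrightarrow> w!k = w'!k"
  shows "card Cy \<le> 2^(m-t)"
proof -
  define E where "E = {k. k < m \<and> \<not>(i \<le> k \<and> k < i+l) \<and> \<not>(i \<le> k+m \<and> k+m < i+l)}"
  define D where "D = {k. k < m \<and> ((i \<le> k \<and> k < i+l) \<or> (i \<le> k+m \<and> k+m < i+l))}"
  have fE: "finite E" "finite D" unfolding E_def D_def by auto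
  have ED: "E \<union> D = {..<m}" "E \<inter> D = {}" unfolding E_def D_def by auto
  have "card {i..<i+l} \<le> card D"
  proof (rule card_inj_on_le[OF _ _ fE(2)])
    show "inj_on (\<lambda>p. p mod m) {i..<i+l}"
    proof (rule inj_onI)
      fix p q assume pq: "p \<in> {i..<i+l}" "q \<in> {i..<i+l}" "p mod m = q mod m"
      have "p < 2*m" "q < 2*m" using pq il by auto
      have md: "x mod m = (if x < m then x else x - m)" if "x < 2*m" for x
      proof (cases "x < m")
        case False then have "x - m < m" using that by simp
        then show ?thesis using False by (simp add: le_mod_geq)
      qed simp
      show "p = q" using md[of p] md[of q] \<open>p < 2*m\<close> \<open>q < 2*m\<close> pq lm
        by (auto split: if_splits)
    qed
    show "(\<lambda>p. p mod m) ` {i..<i+l} \<subseteq> D"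
    proof
      fix x assume "x \<in> (\<lambda>p. p mod m) ` {i..<i+l}"
      then obtain p where p: "p \<in> {i..<i+l}" "x = p mod m" by blast
      have "p < 2*m" using p il by auto
      show "x \<in> D"
      proof (cases "p < m")
        case True then show ?thesis using p unfolding D_def by auto
      next
        case False then have "p - m < m" using \<open>p < 2*m\<close> by simp
        then have "x = p - m" using False p(2) by (simp add: le_mod_geq)
        then show ?thesis using p False \<open>p - m < m\<close> unfolding D_def by auto
      qed
    qed
  qed
  then have cD: "l \<le> card D" by simp
  have "card E + card D = m" using card_Un_disjoint[OF fE ED(2)] ED(1) by simp
  then have cE: "card E \<le> m - t" using cD tl by linarith
  define g where "g w = map (\<lambda>k. w!k) (sorted_list_of_set E)" for w :: "nat list"
  have "card Cy \<le> card {xs. set xs \<subseteq> Sig2 \<and> length xs = card E}"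
  proof (rule card_inj_on_le)
    show "finite {xs. set xs \<subseteq> Sig2 \<and> length xs = card E}"
      by (rule finite_lists_length_eq) (simp add: Sig2_def)
    show "g ` Cy \<subseteq> {xs. set xs \<subseteq> Sig2 \<and> length xs = card E}"
    proof clarsimp
      fix w assume w: "w \<in> Cy"
      have "\<forall>k\<in>E. w!k \<in> Sig2"
      proof
        fix k assume "k \<in> E"
        then have "k < length w" using W w unfolding E_def by auto
        then show "w!k \<in> Sig2" using W w nth_mem by blast
      qed
      then show "set (g w) \<subseteq> Sig2 \<and> length (g w) = card E" using fE(1) by (auto simp: g_def)
    qed
    show "inj_on g Cy"
    proof (rule inj_onI)
      fix w w' assume ww: "w \<in> Cy" "w' \<in> Cy" "g w = g w'"
      then have onE: "\<forall>k\<in>E. w!k = w'!k" using fE(1) by (simp add: g_def map_eq_conv)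
      show "w = w'"
      proof (rule nth_equalityI)
        show "length w = length w'" using W ww by simp
        fix k assume "k < length w"
        then have k: "k < m" using W ww by simp
        show "w!k = w'!k"
        proof (cases "k \<in> E")
          case True then show ?thesis using onE by blast
        next
          case False
          then have "k \<in> D" using ED(1) k by auto
          then have "(i \<le> k \<and> k < i+l) \<noteq> (i \<le> k+m \<and> k+m < i+l)" unfolding D_def using lm by auto
          then show ?thesis using sw ww k by blast
        qed
      qed
    qed
  qed
  also have "\<dots> = 2^card E"
  proof -
    have c2: "card Sig2 = 2" by (simp add: Sig2_def)
    have fin: "finite Sig2" by (simp add: Sig2_def)
    show ?thesis by (simp only: card_lists_length_eq[OF fin] c2)
  qed
  also have "\<dots> \<le> 2^(m-t)" using cE by (simp add: power_increasing)
  finally show ?thesis .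
qed

lemma C_lists: "gen P0 0 s \<Longrightarrow> set s \<subseteq> Sig2"
proof -
  assume a: "gen P0 0 s"
  then obtain x y where xy: "s = x@y" "odd_w 0 x \<and> odd_w 1 y \<or> odd_w 1 x \<and> odd_w 0 y"
    using gen_P0_sound[OF a] by blast
  have S: "0 \<in> Sig2" "1 \<in> Sig2" by (auto simp: Sig2_def)
  show ?thesis using xy odd_set S by auto
qed

lemma ww_notin: "length w = m \<Longrightarrow> \<not> gen P0 0 (w@w)"
proof
  assume a: "length w = m" "gen P0 0 (w@w)"
  then obtain k where "k < m" "(w@w)!k \<noteq> (w@w)!(k+m)" using C_sound[of "w@w" m] by auto
  then show False using a(1) by (simp add: nth_append)
qed

lemma zip3: "length a = i \<Longrightarrow> length b = l \<Longrightarrow>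
  zip (a@b@c) H = zip a (take i H) @ zip b (take l (drop i H)) @ zip c (drop (i+l) H)"
  by (simp add: zip_append1 add.commute)

lemma take3: "zs = u@v@x \<Longrightarrow> length u = i \<Longrightarrow> length v = l \<Longrightarrow>
   take i zs = u \<and> take l (drop i zs) = v \<and> drop (i+l) zs = x"
  by simp

lemma no_advice:
  assumes len: "\<forall>n. length (h n) = n"
    and fP: "finite P"
    and memb: "\<forall>x. set x \<subseteq> Sig2 \<longrightarrow> (\<not> gen P0 0 x \<longleftrightarrow> gen P S (zip x (h (length x))))"
  shows False
proof -
  obtain K0 where K0: "\<forall>x\<in>(\<lambda>p. length (snd p)) ` P. x \<le> K0"
    using fP finite_nat_set_iff_bounded_le by blast
  define K where "K = K0 + 2"
  have KP: "\<forall>(A,r)\<in>P. length r \<le> K" using K0 unfolding K_def by fastforce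
  define NP where "NP = card (fst ` P)"
  define c where "c = (2*K+1)^2 * (NP+1)"
  define t where "t = 8*c"
  define m where "m = K*t"
  have c1: "1 \<le> c" unfolding c_def by (simp add: Suc_le_eq)
  have big: "c * t^2 < 2^t" unfolding t_def by (rule exp_big[OF c1])
  have t2: "2 \<le> t" using c1 unfolding t_def by simp
  have tm: "t \<le> m" unfolding m_def K_def by simp
  define H where "H = h (2*m)"
  have lH: "length H = 2*m" using len H_def by simp
  define W where "W = {w. set w \<subseteq> Sig2 \<and> length w = m}"
  define Q where "Q w y \<longleftrightarrow> (case y of (i, l, A) \<Rightarrow> (\<exists>u v x. zip (w@w) H = u@v@x \<and> length u = i \<and> length v = l \<and>
      A \<in> fst ` P \<and> gen P A v \<and> t \<le> l \<and> l \<le> K*t \<and> (\<forall>v'. gen P A v' \<longrightarrow> gen P S (u@v'@x))))" for w y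
  have ex: "\<forall>w\<in>W. \<exists>y. Q w y"
  proof
    fix w assume w: "w \<in> W"
    have sw: "set (w@w) \<subseteq> Sig2" "length (w@w) = 2*m" using w unfolding W_def by auto
    have "\<not> gen P0 0 (w@w) \<longleftrightarrow> gen P S (zip (w@w) (h (length (w@w))))" using memb sw(1) by blast
    then have g: "gen P S (zip (w@w) H)" using ww_notin[of w m] w sw(2) unfolding W_def H_def by (simp add: mult_2)
    have tl: "t \<le> length (zip (w@w) H)" using sw(2) lH tm by simp
    from decomp[OF g t2 tl KP] obtain A u v x where "zip (w@w) H = u@v@x" "gen P A v" "A \<in> fst ` P" "t \<le> length v"
      "length v \<le> K*t" "\<forall>v'. gen P A v' \<longrightarrow> gen P S (u@v'@x)"
      by blast
    then show "\<exists>y. Q w y" unfolding Q_def by (intro exI[of _ "(length u, length v, A)"]) auto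
  qed
  then obtain f where f: "\<forall>w\<in>W. Q w (f w)" using bchoice by blast
  have Qe: "\<exists>u v x. zip (w@w) H = u@v@x \<and> length u = i \<and> length v = l \<and>
      A \<in> fst ` P \<and> gen P A v \<and> t \<le> l \<and> l \<le> K*t \<and> (\<forall>v'. gen P A v' \<longrightarrow> gen P S (u@v'@x))"
    if "w \<in> W" "f w = (i,l,A)" for w i l A
  proof -
    have "Q w (i,l,A)" using f that by metis
    then show ?thesis unfolding Q_def by simp
  qed
  define T where "T = {..<2*m+1} \<times> {..<2*m+1} \<times> fst ` P"
  have fT: "f w \<in> T" if wW: "w \<in> W" for w
  proof -
    obtain i l A where y: "f w = (i,l,A)" by (cases "f w") auto
    then obtain u v x where "zip (w@w) H = u@v@x" "length u = i" "length v = l" "A \<in> fst ` P"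
      using Qe[OF wW y] by blast
    moreover have "length (zip (w@w) H) = 2*m" using wW lH unfolding W_def by simp
    ultimately have "i + l \<le> 2*m" by (metis length_append le_add1 add.assoc eq_imp_le add_le_cancel_left)
    then show ?thesis unfolding T_def y using \<open>A \<in> fst ` P\<close> by auto
  qed
  have cls: "card {w\<in>W. f w = y} \<le> 2^(m-t)" if "y \<in> T" for y
  proof (cases "{w\<in>W. f w = y} = {}")
    case True then show ?thesis by (simp only: True card.empty zero_le)
  next
    case False
    obtain i l A where y: "y = (i,l,A)" by (cases y) auto
    from False obtain w0 where w0: "w0 \<in> W" "f w0 = y" by blast
    then obtain u v x where uvx: "zip (w0@w0) H = u@v@x" "length u = i" "length v = l" "t \<le> l" "l \<le> K*t"
      using Qe[OF w0(1) w0(2)[unfolded y]] by blast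
    have lm: "l \<le> m" using uvx(5) unfolding m_def by simp
    have il: "i + l \<le> 2*m"
    proof -
      have "length (zip (w0@w0) H) = 2*m" using w0 lH unfolding W_def by simp
      then show ?thesis using uvx by simp
    qed
    show ?thesis
    proof (rule class_bound[OF _ lm uvx(4) il])
      show "\<forall>w\<in>{w\<in>W. f w = y}. set w \<subseteq> Sig2 \<and> length w = m" unfolding W_def by auto
      show "\<forall>w\<in>{w\<in>W. f w = y}. \<forall>w'\<in>{w\<in>W. f w = y}. \<forall>k<m. ((i \<le> k \<and> k < i+l) \<noteq> (i \<le> k+m \<and> k+m < i+l)) \<longrightarrow> w!k = w'!k"
      proof (intro ballI allI impI)
        fix w w' k assume w: "w \<in> {w\<in>W. f w = y}" and w': "w' \<in> {w\<in>W. f w = y}" and k: "k < m"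
          and xor: "(i \<le> k \<and> k < i+l) \<noteq> (i \<le> k+m \<and> k+m < i+l)"
        obtain u1 v1 x1 where 1: "zip (w@w) H = u1@v1@x1" "length u1 = i" "length v1 = l"
          "\<forall>v'. gen P A v' \<longrightarrow> gen P S (u1@v'@x1)"
          using Qe[of w i l A] w unfolding y by blast
        obtain u2 v2 x2 where 2: "zip (w'@w') H = u2@v2@x2" "length u2 = i" "length v2 = l" "gen P A v2"
          using Qe[of w' i l A] w' unfolding y by blast
        have lw: "length w = m" "length w' = m" "set w \<subseteq> Sig2" "set w' \<subseteq> Sig2" using w w' unfolding W_def by auto
        define r where "r = take i (w@w) @ take l (drop i (w'@w')) @ drop (i+l) (w@w)"
        have lr: "length r = 2*m" using lw il unfolding r_def by simp
        have sww: "set (w@w) \<subseteq> Sig2" "set (w'@w') \<subseteq> Sig2" using lw by auto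
        have p1: "set (take i (w@w)) \<subseteq> Sig2" by (rule order_trans[OF set_take_subset sww(1)])
        have p2: "set (take l (drop i (w'@w'))) \<subseteq> Sig2"
          by (rule order_trans[OF set_take_subset order_trans[OF set_drop_subset sww(2)]])
        have p3: "set (drop (i+l) (w@w)) \<subseteq> Sig2" by (rule order_trans[OF set_drop_subset sww(1)])
        have sr: "set r \<subseteq> Sig2" using p1 p2 p3 unfolding r_def set_append by blast
        have u1e: "u1 = zip (take i (w@w)) (take i H)" "x1 = zip (drop (i+l) (w@w)) (drop (i+l) H)"
          using take3[OF 1(1,2,3)] by (simp_all only: take_zip drop_zip)
        have v2e: "v2 = zip (take l (drop i (w'@w'))) (take l (drop i H))"
          using take3[OF 2(1,2,3)] by (simp_all only: take_zip drop_zip)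
        have la: "length (take i (w@w)) = i" using lw il by simp
        have lb: "length (take l (drop i (w'@w'))) = l" using lw il by simp
        have "zip r H = u1 @ v2 @ x1"
          unfolding r_def u1e v2e by (rule zip3[OF la lb])
        then have "gen P S (zip r H)" using 1(4) 2(4) by simp
        then have "\<not> gen P0 0 r" using memb sr lr unfolding H_def by simp
        then have "\<forall>k<m. r!k = r!(k+m)" using C_complete[OF lr sr] by blast
        then show "w!k = w'!k" using swap_r[OF lw(1,2) il r_def _ k xor] by blast
      qed
    qed
  qed
  have "card W \<le> card T * 2^(m-t)"
  proof -
    have "W = (\<Union>y\<in>T. {w\<in>W. f w = y})" using fT by auto
    then have "card W \<le> (\<Sum>y\<in>T. card {w\<in>W. f w = y})" using card_UN_le[of T "\<lambda>y. {w\<in>W. f w = y}"]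
      unfolding T_def using fP by simp
    also have "\<dots> \<le> card T * 2^(m-t)" using sum_bounded_above[of T "\<lambda>y. card {w\<in>W. f w = y}" "2^(m-t)"] cls by simp
    finally show ?thesis .
  qed
  moreover have "card W = 2^m"
  proof -
    have "card Sig2 = 2" by (simp add: Sig2_def)
    moreover have "finite Sig2" by (simp add: Sig2_def)
    ultimately show ?thesis unfolding W_def by (simp only: card_lists_length_eq)
  qed
  moreover have "card T = (2*m+1)^2 * NP" unfolding T_def NP_def by (simp add: power2_eq_square card_cartesian_product algebra_simps)
  ultimately have "2^t * 2^(m-t) \<le> (2*m+1)^2 * NP * 2^(m-t)"
    using tm by (simp add: power_add[symmetric])
  then have "2^t \<le> (2*m+1)^2 * NP" by simp
  also have "\<dots> \<le> ((2*K+1)*t)^2 * NP"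
  proof -
    have "2*m+1 \<le> (2*K+1)*t" unfolding m_def using t2 by (simp add: algebra_simps)
    then show ?thesis by (intro mult_le_mono1 power_mono) auto
  qed
  also have "\<dots> = ((2*K+1)^2 * NP) * t^2" by (simp only: power_mult_distrib mult_ac)
  also have "\<dots> \<le> ((2*K+1)^2 * (NP+1)) * t^2" by (intro mult_le_mono1 mult_le_mono2) simp
  also have "\<dots> = c * t^2" unfolding c_def by simp
  finally show False using big by simp
qed


theorem proposition4p4:
  shows "\<exists>(Sig :: nat set) (L :: nat list set).
           finite Sig \<and> coCFL Sig L \<and> \<not> CFL_advice Sig L"
proof (intro exI conjI)
  show "finite Sig2" by (simp add: Sig2_def)
  have sub: "lang P0 0 \<subseteq> lists Sig2" using C_lists lang_gen by blast
  have eq: "lists Sig2 - (lists Sig2 - lang P0 0) = lang P0 0" using sub by blast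
  show "coCFL Sig2 (lists Sig2 - lang P0 0)"
    unfolding coCFL_def CFL_def eq
  proof (intro conjI)
    show "lists Sig2 - lang P0 0 \<subseteq> lists Sig2" by (rule Diff_subset)
    show "lang P0 0 \<subseteq> lists Sig2" by (rule sub)
    show "\<exists>P S. finite P \<and> lang P0 0 = lang P S" using finite_P0 by blast
  qed
  show "\<not> CFL_advice Sig2 (lists Sig2 - lang P0 0)"
  proof
    assume "CFL_advice Sig2 (lists Sig2 - lang P0 0)"
    then obtain Gamma :: "nat set" and h :: "nat \<Rightarrow> nat list" and L' :: "(nat \<times> nat) list set" where
      hl: "\<forall>n. length (h n) = n \<and> set (h n) \<subseteq> Gamma" and cf: "CFL (Sig2 \<times> Gamma) L'"
      and iff: "\<forall>x \<in> lists Sig2. x \<in> lists Sig2 - lang P0 0 \<longleftrightarrow> zip x (h (length x)) \<in> L'"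
      unfolding CFL_advice_def by blast
    from cf obtain P S where fP: "finite P" and L': "L' = lang P S" unfolding CFL_def by blast
    show False
    proof (rule no_advice[of h P S])
      show "\<forall>n. length (h n) = n" using hl by blast
      show "finite P" by (rule fP)
      show "\<forall>x. set x \<subseteq> Sig2 \<longrightarrow> (\<not> gen P0 0 x \<longleftrightarrow> gen P S (zip x (h (length x))))"
      proof (intro allI impI)
        fix x :: "nat list" assume "set x \<subseteq> Sig2"
        then have xl: "x \<in> lists Sig2" by auto
        then have "x \<in> lists Sig2 - lang P0 0 \<longleftrightarrow> zip x (h (length x)) \<in> L'" using iff by blast
        then show "\<not> gen P0 0 x \<longleftrightarrow> gen P S (zip x (h (length x)))"
          using xl unfolding L' by (simp add: lang_gen)
      qed
    qed
  qed
qed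

end
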